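(* Let $A,B\in\mathcal M_n$ be accretive with $W(A),W(B)\subset S_\alpha$ for some $0\le\alpha<\pi/2$, and let $f\in\mathfrak m$. Then $$\Re(A\sigma_fB)\le\sec^2(\alpha)\,(\Re A)\,\sigma_f\,(\Re B).$$
   Context: A matrix $A$ is accretive if $\Re A=\frac{A+A^*}{2}$ is positive definite. $W(A)$ is the numerical range, $S_\alpha=\{z:\Re z>0,\ |\Im z|\le\tan(\alpha)\Re z\}$. $\le$ is the Löwner order. $\mathfrak m$ is the set of matrix monotone $f:(0,\infty)\to(0,\infty)$ with $f(1)=1$; each has a unique probability measure $\nu_f$ on $[0,1]$ with $f(x)=\int_0^1((1-t)+tx^{-1})^{-1}d\nu_f(t)$, $x>0$. For accretive $A,B$: $A!_tB=((1-t)A^{-1}+tB^{-1})^{-1}$ and $A\sigma_fB:=\int_0^1A!_tB\,d\nu_f(t)$. *)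

theory Defs
  imports "HOL-Analysis.Analysis" "HOL-Probability.Probability"
begin

type_synonym 'n cmat = "complex^'n^'n"

definition cadj :: "'n::finite cmat \<Rightarrow> 'n cmat" where
  "cadj A = (\<chi> i j. cnj (A $ j $ i))"

definition hpart :: "'n::finite cmat \<Rightarrow> 'n cmat" where
  "hpart A = (1/2) *\<^sub>R (A + cadj A)"

definition hermitian :: "'n::finite cmat \<Rightarrow> bool" where
  "hermitian A \<longleftrightarrow> cadj A = A"

definition qform :: "'n::finite cmat \<Rightarrow> complex^'n \<Rightarrow> complex" where
  "qform A x = (\<Sum>i\<in>UNIV. cnj (x $ i) * (A *v x) $ i)"

definition pos_def :: "'n::finite cmat \<Rightarrow> bool" where
  "pos_def A \<longleftrightarrow> hermitian A \<and> (\<forall>x. x \<noteq> 0 \<longrightarrow> Re (qform A x) > 0)"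

definition pos_semidef :: "'n::finite cmat \<Rightarrow> bool" where
  "pos_semidef A \<longleftrightarrow> hermitian A \<and> (\<forall>x. Re (qform A x) \<ge> 0)"

definition loewner_le :: "'n::finite cmat \<Rightarrow> 'n cmat \<Rightarrow> bool" where
  "loewner_le X Y \<longleftrightarrow> pos_semidef (Y - X)"

definition accretive :: "'n::finite cmat \<Rightarrow> bool" where
  "accretive A \<longleftrightarrow> pos_def (hpart A)"

definition num_range :: "'n::finite cmat \<Rightarrow> complex set" where
  "num_range A = {qform A x | x. norm x = 1}"

definition sector :: "real \<Rightarrow> complex set" where
  "sector \<alpha> = {z. Re z > 0 \<and> \<bar>Im z\<bar> \<le> tan \<alpha> * Re z}"

definition wharm :: "'n::finite cmat \<Rightarrow> real \<Rightarrow> 'n cmat \<Rightarrow> 'n cmat" where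
  "wharm A t B = matrix_inv ((1 - t) *\<^sub>R matrix_inv A + t *\<^sub>R matrix_inv B)"

text \<open>A sigma_f B, where nu is the representing probability measure of f\<close>
definition mat_mean :: "real measure \<Rightarrow> 'n::finite cmat \<Rightarrow> 'n cmat \<Rightarrow> 'n cmat" where
  "mat_mean \<nu> A B = integral\<^sup>L \<nu> (\<lambda>t. wharm A t B)"

section \<open>Matrix monotone functions (all dimensions; matrices as nat-indexed arrays)\<close>

definition unitary_n :: "nat \<Rightarrow> (nat \<Rightarrow> nat \<Rightarrow> complex) \<Rightarrow> bool" where
  "unitary_n n U \<longleftrightarrow>
     (\<forall>i<n. \<forall>j<n. (\<Sum>k<n. cnj (U k i) * U k j) = (if i = j then 1 else 0))"

definition spec_mat :: "nat \<Rightarrow> (nat \<Rightarrow> nat \<Rightarrow> complex) \<Rightarrow> (nat \<Rightarrow> real) \<Rightarrow> nat \<Rightarrow> nat \<Rightarrow> complex" where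
  "spec_mat n U d = (\<lambda>i j. \<Sum>k<n. U i k * complex_of_real (d k) * cnj (U j k))"

definition loewner_le_n :: "nat \<Rightarrow> (nat \<Rightarrow> nat \<Rightarrow> complex) \<Rightarrow> (nat \<Rightarrow> nat \<Rightarrow> complex) \<Rightarrow> bool" where
  "loewner_le_n n X Y \<longleftrightarrow>
     (\<forall>i<n. \<forall>j<n. X i j = cnj (X j i) \<and> Y i j = cnj (Y j i)) \<and>
     (\<forall>v. Re (\<Sum>i<n. \<Sum>j<n. cnj (v i) * (Y i j - X i j) * v j) \<ge> 0)"

text \<open>f is matrix monotone on positive definite matrices of every size:
  f(A) for positive definite A = U diag(d) U^* is U diag(f o d) U^*.\<close>
definition matrix_monotone :: "(real \<Rightarrow> real) \<Rightarrow> bool" where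
  "matrix_monotone f \<longleftrightarrow>
    (\<forall>n U V d e. unitary_n n U \<and> unitary_n n V \<and> (\<forall>k<n. d k > 0 \<and> e k > 0) \<and>
        loewner_le_n n (spec_mat n U d) (spec_mat n V e) \<longrightarrow>
        loewner_le_n n (spec_mat n U (f \<circ> d)) (spec_mat n V (f \<circ> e)))"

definition class_m :: "(real \<Rightarrow> real) set" where
  "class_m = {f. matrix_monotone f \<and> (\<forall>x>0. f x > 0) \<and> f 1 = 1}"

definition represents :: "real measure \<Rightarrow> (real \<Rightarrow> real) \<Rightarrow> bool" where
  "represents \<nu> f \<longleftrightarrow> prob_space \<nu> \<and> sets \<nu> = sets (restrict_space borel {0..1}) \<and>
     (\<forall>x>0. f x = (\<integral>t. inverse ((1 - t) + t * inverse x) \<partial>\<nu>))"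

end

theory Submission
  imports Defs
begin


definition ip :: "complex^'n::finite \<Rightarrow> complex^'n \<Rightarrow> complex" where
  "ip x y = (\<Sum>i\<in>UNIV. cnj (x $ i) * y $ i)"

lemma qform_ip: "qform A x = ip x (A *v x)"
  by (simp add: qform_def ip_def)

lemma ip_adj: "ip x (M *v y) = ip (cadj M *v x) y"
proof -
  have "ip x (M *v y) = (\<Sum>i\<in>UNIV. \<Sum>j\<in>UNIV. cnj (x$i) * M$i$j * y$j)"
    by (simp add: ip_def matrix_vector_mult_def sum_distrib_left mult.assoc)
  also have "\<dots> = (\<Sum>j\<in>UNIV. \<Sum>i\<in>UNIV. cnj (x$i) * M$i$j * y$j)"
    by (rule sum.swap)
  also have "\<dots> = ip (cadj M *v x) y"
    by (simp add: ip_def matrix_vector_mult_def cadj_def sum_distrib_left sum_distrib_right mult_ac)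
  finally show ?thesis .
qed

lemma ip_cnj: "ip y x = cnj (ip x y)"
  by (simp add: ip_def mult.commute)

lemma ip_add_right: "ip x (y + z) = ip x y + ip x z"
  by (simp add: ip_def distrib_left sum.distrib)
lemma ip_diff_right: "ip x (y - z) = ip x y - ip x z"
  by (simp add: ip_def right_diff_distrib sum_subtractf)
lemma ip_add_left: "ip (y + z) x = ip y x + ip z x"
  by (simp add: ip_def distrib_right sum.distrib)
lemma ip_diff_left: "ip (y - z) x = ip y x - ip z x"
  by (simp add: ip_def left_diff_distrib sum_subtractf)
lemma ip_smult_right: "ip x (c *s y) = c * ip x y"
  by (simp add: ip_def sum_distrib_left mult.left_commute)
lemma ip_smult_left: "ip (c *s y) x = cnj c * ip y x"
  by (simp add: ip_def sum_distrib_left mult.assoc)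

lemma mv_smult: "(M::complex^'n::finite^'n) *v (c *s x) = c *s (M *v x)"
  by (simp add: vec.scale)

lemma cadj_cadj[simp]: "cadj (cadj M) = M"
  by (simp add: cadj_def vec_eq_iff)

lemma hpart_hermitian: "hermitian (hpart M)"
  by (simp add: hermitian_def hpart_def cadj_def vec_eq_iff)

lemma ip_self_M: "ip (M *v z) z = cnj (qform M z)"
  by (simp add: qform_ip ip_cnj[of "M *v z"])

lemma qform_cadj: "qform (cadj M) x = cnj (qform M x)"
  by (simp add: qform_ip ip_adj[of x "cadj M"] ip_cnj[of "M *v x"])

lemma qform_add: "qform (A + B) x = qform A x + qform B x"
  by (simp add: qform_ip matrix_vector_mult_add_rdistrib ip_add_right)
lemma qform_diff: "qform (A - B) x = qform A x - qform B x"
  by (simp add: qform_ip matrix_vector_mult_diff_rdistrib ip_diff_right)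
lemma qform_scaleR: "qform (c *\<^sub>R A) x = of_real c * qform A x"
  by (simp add: qform_def matrix_vector_mult_def sum_distrib_left mult_ac scaleR_conv_of_real[symmetric])

lemma qform_hpart: "qform (hpart M) x = of_real (Re (qform M x))"
  by (simp add: hpart_def qform_scaleR qform_add qform_cadj complex_eq_iff)



lemma qform_zero[simp]: "qform M 0 = 0"
  by (simp add: qform_def)

lemma posform_invertible:
  fixes M :: "complex^'n::finite^'n"
  assumes "\<forall>w. w \<noteq> 0 \<longrightarrow> Re (qform M w) > 0"
  shows "invertible M"
proof -
  have inj: "inj ((*v) M)"
  proof (rule injI)
    fix a b assume "M *v a = M *v b"
    then have "M *v (a - b) = 0" by (simp add: matrix_vector_mult_diff_distrib)
    then have "qform M (a - b) = 0" by (simp add: qform_ip ip_def)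
    then show "a = b" using assms by (metis eq_iff_diff_eq_0 less_irrefl zero_complex.sel(1))
  qed
  have "surj ((*v) M)"
    by (rule vec.linear_inj_imp_surj[OF matrix_vector_mul_linear_gen inj])
  with inj show ?thesis by (simp add: invertible_eq_bij bij_def)
qed

lemma inv_props:
  assumes "invertible (M::complex^'n::finite^'n)"
  shows "M ** matrix_inv M = mat 1" "matrix_inv M ** M = mat 1"
  using someI_ex[OF assms[unfolded invertible_def]] by (auto simp: matrix_inv_def)

lemma inv_apply:
  assumes "invertible (M::complex^'n::finite^'n)"
  shows "M *v (matrix_inv M *v x) = x" "matrix_inv M *v (M *v x) = x"
  by (simp_all add: matrix_vector_mul_assoc inv_props[OF assms])

lemma cadj_mult: "cadj ((A::complex^'n::finite^'n) ** B) = cadj B ** cadj A"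
  by (simp add: cadj_def matrix_matrix_mult_def vec_eq_iff mult.commute)

lemma cadj_mat1: "cadj (mat 1 :: complex^'n::finite^'n) = mat 1"
  by (simp add: cadj_def mat_def vec_eq_iff)

lemma hermitian_inv:
  assumes "invertible (H::complex^'n::finite^'n)" "hermitian H"
  shows "hermitian (matrix_inv H)"
proof -
  have "cadj (matrix_inv H) ** H = mat 1"
    using assms by (metis cadj_mat1 cadj_mult hermitian_def inv_props(1))
  then have "cadj (matrix_inv H) = cadj (matrix_inv H) ** (H ** matrix_inv H)"
    by (simp add: inv_props[OF assms(1)])
  also have "\<dots> = matrix_inv H"
    by (simp add: matrix_mul_assoc \<open>cadj (matrix_inv H) ** H = mat 1\<close>)
  finally show ?thesis by (simp add: hermitian_def)
qed

lemma qform_scaleR_vec: "qform M (r *\<^sub>R x) = of_real (r^2) * qform M x"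
  unfolding qform_def matrix_vector_mult_def vec_lambda_beta vector_scaleR_component
  by (simp add: sum_distrib_left scaleR_conv_of_real power2_eq_square mult_ac)

lemma sector_all:
  assumes "num_range X \<subseteq> sector \<alpha>"
  shows "\<bar>Im (qform X x)\<bar> \<le> tan \<alpha> * Re (qform X x) \<and> (x \<noteq> 0 \<longrightarrow> Re (qform X x) > 0)"
proof (cases "x = 0")
  case True then show ?thesis by simp
next
  case False
  define r where "r = 1 / norm x"
  have r: "r > 0" using False by (simp add: r_def)
  have "norm (r *\<^sub>R x) = 1" using False by (simp add: r_def)
  then have "qform X (r *\<^sub>R x) \<in> sector \<alpha>" using assms unfolding num_range_def by blast
  then have h: "Re (qform X (r *\<^sub>R x)) > 0" "\<bar>Im (qform X (r *\<^sub>R x))\<bar> \<le> tan \<alpha> * Re (qform X (r *\<^sub>R x))"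
    by (auto simp: sector_def)
  have r2: "r^2 > 0" using r by simp
  have e1: "Re (qform X (r *\<^sub>R x)) = r^2 * Re (qform X x)" "Im (qform X (r *\<^sub>R x)) = r^2 * Im (qform X x)"
    by (simp_all add: qform_scaleR_vec)
  from h(1) r2 have "Re (qform X x) > 0" by (simp add: e1 zero_less_mult_iff)
  moreover from h(2) have "r^2 * \<bar>Im (qform X x)\<bar> \<le> r^2 * (tan \<alpha> * Re (qform X x))"
    by (simp add: e1 abs_mult mult_ac)
  then have "\<bar>Im (qform X x)\<bar> \<le> tan \<alpha> * Re (qform X x)" using r2 by simp
  ultimately show ?thesis by simp
qed

lemma accretive_pos: "accretive X \<Longrightarrow> w \<noteq> 0 \<Longrightarrow> Re (qform X w) > 0"
  by (simp add: accretive_def pos_def_def qform_hpart)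



lemma qform_expand:
  "qform X (p - (of_real l) *s q) =
     qform X p - of_real l * ip p (X *v q) - of_real l * ip q (X *v p) + of_real (l*l) * qform X q"
  by (simp add: qform_ip matrix_vector_mult_diff_distrib mv_smult ip_diff_left ip_diff_right
      ip_smult_left ip_smult_right algebra_simps)

lemma formG:
  assumes "\<forall>w. Re (c * qform X w) \<ge> 0" "l > 0"
  shows "Re (c * ip p (X *v q)) + Re (c * ip q (X *v p)) \<le> (1/l) * Re (c * qform X p) + l * Re (c * qform X q)"
proof -
  have "0 \<le> Re (c * qform X (p - (of_real l) *s q))" using assms(1) by blast
  also have "\<dots> = Re (c * qform X p) - l * (Re (c * ip p (X *v q)) + Re (c * ip q (X *v p))) + l*l * Re (c * qform X q)"
    by (simp add: qform_expand algebra_simps)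
  finally have "l * (Re (c * ip p (X *v q)) + Re (c * ip q (X *v p))) \<le> Re (c * qform X p) + l * (l * Re (c * qform X q))"
    by (simp add: algebra_simps)
  then show ?thesis using assms(2) by (simp add: field_simps)
qed

lemma Re_ofr: "Re (of_real r * z) = r * Re z" by simp

lemma formG':
  assumes "\<forall>w. Re (c * qform X w) \<ge> 0" "l > 0"
  shows "Re (c * cnj d * ip y (X *v w)) + Re (c * d * ip w (X *v y)) \<le>
     Re (of_real (1/l) * c * (cnj d * d) * qform X y) + Re (of_real l * c * qform X w)"
proof -
  have qd: "qform X (d *s y) = cnj d * d * qform X y"
    by (simp add: qform_ip mv_smult ip_smult_left ip_smult_right)
  have e1: "ip (d *s y) (X *v w) = cnj d * ip y (X *v w)" by (simp add: ip_smult_left)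
  have e2: "ip w (X *v (d *s y)) = d * ip w (X *v y)" by (simp add: mv_smult ip_smult_right)
  have e3: "Re (of_real (1/l) * c * (cnj d * d) * qform X y) = 1/l * Re (c * qform X (d *s y))"
    by (simp only: qd mult.assoc Re_ofr)
  have e4: "Re (of_real l * c * qform X w) = l * Re (c * qform X w)"
    by (simp only: mult.assoc Re_ofr)
  have "Re (c * ip (d *s y) (X *v w)) + Re (c * ip w (X *v (d *s y))) \<le> 1/l * Re (c * qform X (d *s y)) + l * Re (c * qform X w)"
    by (rule formG[OF assms])
  then show ?thesis unfolding e1 e2 e3 e4 by (simp only: mult.assoc)
qed

lemma combine:
  assumes "Re (a1*b) + Re (e1*b') \<le> Re (f1 * qy) + Re (g1*qw)"
    "Re (a2*b) + Re (e2*b') \<le> Re (f2 * qy) + Re (g2*qw)"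
    "a1 + a2 = 2" "e1 + e2 = 0" "f1 + f2 = 1" "g1 + g2 = of_real s"
  shows "2 * Re b \<le> Re qy + s * Re qw"
proof -
  have "Re ((a1 + a2) * b) + Re ((e1+e2) * b') \<le> Re ((f1+f2) * qy) + Re ((g1+g2) * qw)"
    using add_mono[OF assms(1,2)] by (simp add: distrib_right)
  then show ?thesis using assms(3-6) by simp
qed

lemma id1: "t > 0 \<Longrightarrow> (1 - \<i> / of_real t) * cnj ((1 - \<i> * of_real t) / 2) + (1 + \<i> / of_real t) * cnj ((1 + \<i> * of_real t) / 2) = (2::complex)"
  by (simp add: complex_eq_iff field_simps)
lemma id2: "t > 0 \<Longrightarrow> (1 - \<i> / of_real t) * ((1 - \<i> * of_real t) / 2) + (1 + \<i> / of_real t) * ((1 + \<i> * of_real t) / 2) = (0::complex)"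
  by (simp add: complex_eq_iff field_simps)
lemma id3: assumes "t > 0" "s = 1 + t^2"
  shows "complex_of_real (1 / (s / 2)) * (1 - \<i> / of_real t) * (cnj ((1 - \<i> * of_real t) / 2) * ((1 - \<i> * of_real t) / 2)) + complex_of_real (1 / (s / 2)) * (1 + \<i> / of_real t) * (cnj ((1 + \<i> * of_real t) / 2) * ((1 + \<i> * of_real t) / 2)) = 1"
proof -
  have sp: "s > 0" using assms by (simp add: add_pos_nonneg)
  have d1: "cnj ((1 - \<i> * of_real t) / 2) * ((1 - \<i> * of_real t) / 2) = of_real (s/4)"
    by (simp add: complex_eq_iff assms(2) power2_eq_square field_simps)
  have d2: "cnj ((1 + \<i> * of_real t) / 2) * ((1 + \<i> * of_real t) / 2) = of_real (s/4)"
    by (simp add: complex_eq_iff assms(2) power2_eq_square field_simps)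
  show ?thesis unfolding d1 d2 using sp assms(1) by (simp add: complex_eq_iff field_simps)
qed
lemma id4: "complex_of_real (s / 2) * (1 - \<i> / of_real t) + complex_of_real (s / 2) * (1 + \<i> / of_real t) = complex_of_real s"
  by (simp add: complex_eq_iff field_simps)

lemma sector_nonneg:
  assumes "\<bar>Im q\<bar> \<le> t * Re q" "t > 0"
  shows "Re ((1 - \<i> / of_real t) * q) \<ge> 0" "Re ((1 + \<i> / of_real t) * q) \<ge> 0"
proof -
  have e: "Re ((1 - \<i> / of_real t) * q) = Re q + Im q / t" "Re ((1 + \<i> / of_real t) * q) = Re q - Im q / t"
    by simp_all
  have a: "\<bar>Im q\<bar> / t \<le> Re q" using assms by (simp add: divide_le_eq mult.commute)
  have b: "- \<bar>Im q\<bar> / t \<le> Im q / t" "Im q / t \<le> \<bar>Im q\<bar> / t"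
    using assms(2) divide_right_mono[of "-\<bar>Im q\<bar>" "Im q" t] divide_right_mono[of "Im q" "\<bar>Im q\<bar>" t] by simp_all
  show "Re ((1 - \<i> / of_real t) * q) \<ge> 0" "Re ((1 + \<i> / of_real t) * q) \<ge> 0"
    unfolding e using a b by linarith+
qed

lemma sector_CS_pos:
  assumes sec: "\<forall>w. \<bar>Im (qform X w)\<bar> \<le> t * Re (qform X w)" and tp: "t > 0"
  shows "2 * Re (ip y (X *v w)) \<le> Re (qform X y) + (1 + t^2) * Re (qform X w)"
proof -
  define s where "s = 1 + t^2"
  have sp: "s > 0" by (simp add: s_def add_pos_nonneg)
  have hp: "\<forall>w. Re ((1 - \<i> / of_real t) * qform X w) \<ge> 0" using sec tp sector_nonneg(1) by blast
  have hm: "\<forall>w. Re ((1 + \<i> / of_real t) * qform X w) \<ge> 0" using sec tp sector_nonneg(2) by blast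
  have lp: "s/2 > 0" using sp by simp
  note i1 = formG'[OF hp lp, of "(1 - \<i> * of_real t) / 2" y w]
  note i2 = formG'[OF hm lp, of "(1 + \<i> * of_real t) / 2" y w]
  have "2 * Re (ip y (X *v w)) \<le> Re (qform X y) + s * Re (qform X w)"
    by (rule combine[OF i1 i2 id1[OF tp] id2[OF tp] id3[OF tp s_def] id4])
  then show ?thesis by (simp add: s_def)
qed

lemma sector_CS:
  assumes sec: "\<forall>w. \<bar>Im (qform X w)\<bar> \<le> t * Re (qform X w)" and t: "t \<ge> 0"
    and pos: "\<forall>w. Re (qform X w) \<ge> 0"
  shows "2 * Re (ip y (X *v w)) \<le> Re (qform X y) + (1 + t^2) * Re (qform X w)"
proof (cases "t = 0")
  case True
  have h1: "\<forall>w. Re (1 * qform X w) \<ge> 0" using pos by simp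
  have h2: "\<forall>w. Re (\<i> * qform X w) \<ge> 0" using sec True by simp
  have i1: "Re (1 * cnj 1 * ip y (X *v w)) + Re (1 * 1 * ip w (X *v y)) \<le>
     Re (of_real (1/1) * 1 * (cnj 1 * 1) * qform X y) + Re (of_real 1 * 1 * qform X w)"
    by (rule formG'[OF h1]) simp
  have i2: "Re (\<i> * cnj \<i> * ip y (X *v w)) + Re (\<i> * \<i> * ip w (X *v y)) \<le>
     Re (of_real (1/1) * \<i> * (cnj \<i> * \<i>) * qform X y) + Re (of_real 1 * \<i> * qform X w)"
    by (rule formG'[OF h2]) simp
  have z: "\<forall>w. Im (qform X w) = 0" using sec True by simp
  have j1: "Re (ip y (X *v w)) + Re (ip w (X *v y)) \<le> Re (qform X y) + Re (qform X w)" using i1 by simp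
  have j2: "Re (ip y (X *v w)) - Re (ip w (X *v y)) \<le> 0" using i2 z by simp
  show ?thesis using j1 j2 True by simp
next
  case False
  then show ?thesis using sector_CS_pos[OF sec] t by simp
qed



lemma cadj_add: "cadj (A + B) = cadj A + cadj B"
  by (simp add: cadj_def vec_eq_iff)
lemma cadj_scaleR: "cadj (r *\<^sub>R A) = r *\<^sub>R cadj A"
  by (simp add: cadj_def vec_eq_iff)

lemma qform_smult_vec: "qform X (d *s y) = cnj d * d * qform X y"
  by (simp add: qform_ip mv_smult ip_smult_left ip_smult_right)

lemma inv_pos:
  assumes "invertible M" "\<forall>w. w \<noteq> 0 \<longrightarrow> Re (qform M w) > 0"
  shows "\<forall>w. w \<noteq> 0 \<longrightarrow> Re (qform (matrix_inv M) w) > 0"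
proof (intro allI impI)
  fix w :: "complex^'a" assume w: "w \<noteq> 0"
  define u where "u = matrix_inv M *v w"
  have Mu: "M *v u = w" by (simp add: u_def inv_apply[OF assms(1)])
  have "u \<noteq> 0" using w Mu by auto
  then have "Re (qform M u) > 0" using assms(2) by blast
  moreover have "qform (matrix_inv M) w = cnj (qform M u)"
  proof -
    have "qform (matrix_inv M) w = ip w u" by (simp add: qform_ip u_def)
    also have "\<dots> = ip (M *v u) u" by (simp add: Mu)
    finally show ?thesis by (simp add: ip_self_M)
  qed
  ultimately show "Re (qform (matrix_inv M) w) > 0" by simp
qed

lemma pos_nonneg: "\<forall>w. w \<noteq> 0 \<longrightarrow> Re (qform M w) > 0 \<Longrightarrow> Re (qform M w) \<ge> 0"
  by (cases "w = 0") (auto intro: less_imp_le)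

lemma ineq_b:
  assumes acc: "accretive X" and sec: "\<forall>w. \<bar>Im (qform X w)\<bar> \<le> t * Re (qform X w)" and t: "t \<ge> 0"
  shows "Re (qform (matrix_inv (hpart X)) z) \<le> (1 + t^2) * Re (qform (matrix_inv X) z)"
proof -
  have posX: "\<forall>w. w \<noteq> 0 \<longrightarrow> Re (qform X w) > 0" using accretive_pos[OF acc] by blast
  have posH: "\<forall>w. w \<noteq> 0 \<longrightarrow> Re (qform (hpart X) w) > 0" using posX by (simp add: qform_hpart)
  have iX: "invertible X" by (rule posform_invertible[OF posX])
  have iH: "invertible (hpart X)" by (rule posform_invertible[OF posH])
  define y where "y = matrix_inv (hpart X) *v z"
  define w where "w = matrix_inv X *v z"
  have zH: "hpart X *v y = z" by (simp add: y_def inv_apply[OF iH])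
  have zX: "X *v w = z" by (simp add: w_def inv_apply[OF iX])
  have a1: "Re (qform (matrix_inv (hpart X)) z) = Re (ip z y)" by (simp add: qform_ip y_def)
  have a2: "Re (ip z y) = Re (qform X y)"
    by (simp add: zH[symmetric] ip_self_M qform_hpart)
  have a3: "Re (ip z y) = Re (ip y (X *v w))"
    by (subst ip_cnj) (simp add: zX)
  have a4: "Re (qform (matrix_inv X) z) = Re (qform X w)"
  proof -
    have "qform (matrix_inv X) z = ip z w" by (simp add: qform_ip w_def)
    also have "\<dots> = ip (X *v w) w" by (simp add: zX)
    finally show ?thesis by (simp add: ip_self_M)
  qed
  have cs: "2 * Re (ip y (X *v w)) \<le> Re (qform X y) + (1 + t^2) * Re (qform X w)"
    by (rule sector_CS[OF sec t]) (use posX pos_nonneg in blast)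
  show ?thesis unfolding a4 using a1 a2 a3 cs by linarith
qed

lemma ineq_L2:
  assumes herm: "hermitian D" and iD: "invertible D" and pos: "\<forall>v. Re (qform D v) \<ge> 0"
  shows "2 * Re (ip x v) - Re (qform D v) \<le> Re (qform (matrix_inv D) x)"
proof -
  define u where "u = matrix_inv D *v x"
  have Du: "D *v u = x" by (simp add: u_def inv_apply[OF iD])
  have e1: "ip v (D *v u) = cnj (ip x v)" by (simp add: Du ip_cnj[of v])
  have e2: "ip u (D *v v) = ip x v"
    using herm by (simp add: ip_adj[of u D v] hermitian_def Du)
  have e3: "ip u (D *v u) = cnj (qform (matrix_inv D) x)"
    by (simp add: Du qform_ip u_def[symmetric] ip_cnj[of u x])
  have "qform D (v - u) = qform D v - ip v (D *v u) - ip u (D *v v) + ip u (D *v u)"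
    by (simp add: qform_ip matrix_vector_mult_diff_distrib ip_diff_left ip_diff_right algebra_simps)
  then have "Re (qform D (v - u)) = Re (qform D v) - 2 * Re (ip x v) + Re (qform (matrix_inv D) x)"
    by (simp add: e1 e2 e3)
  with pos[rule_format, of "v - u"] show ?thesis by linarith
qed



lemma comb_pos:
  assumes "\<forall>w. w \<noteq> 0 \<longrightarrow> Re (qform P w) > 0" "\<forall>w. w \<noteq> 0 \<longrightarrow> Re (qform Q w) > 0"
    "0 \<le> \<tau>" "\<tau> \<le> 1"
  shows "\<forall>w. w \<noteq> 0 \<longrightarrow> Re (qform ((1 - \<tau>) *\<^sub>R P + \<tau> *\<^sub>R Q) w) > 0"
proof (intro allI impI)
  fix w :: "complex^'a" assume w: "w \<noteq> 0"
  have p: "Re (qform P w) > 0" "Re (qform Q w) > 0" using assms(1,2) w by auto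
  have e: "Re (qform ((1 - \<tau>) *\<^sub>R P + \<tau> *\<^sub>R Q) w) = (1 - \<tau>) * Re (qform P w) + \<tau> * Re (qform Q w)"
    by (simp add: qform_add qform_scaleR)
  show "Re (qform ((1 - \<tau>) *\<^sub>R P + \<tau> *\<^sub>R Q) w) > 0"
  proof (cases "\<tau> = 1")
    case True then show ?thesis using e p by simp
  next
    case False
    then have "(1 - \<tau>) * Re (qform P w) > 0" using assms(4) p by simp
    moreover have "\<tau> * Re (qform Q w) \<ge> 0" using assms(3) p by simp
    ultimately show ?thesis using e by linarith
  qed
qed

lemma pointwise:
  fixes A B :: "complex^'n::finite^'n"
  assumes accA: "accretive A" and accB: "accretive B"
    and secA: "\<forall>w. \<bar>Im (qform A w)\<bar> \<le> t * Re (qform A w)"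
    and secB: "\<forall>w. \<bar>Im (qform B w)\<bar> \<le> t * Re (qform B w)"
    and t: "t \<ge> 0" and tau: "0 \<le> \<tau>" "\<tau> \<le> 1"
  shows "hermitian (wharm (hpart A) \<tau> (hpart B))"
    "Re (qform (hpart (wharm A \<tau> B)) x) \<le> (1 + t^2) * Re (qform (wharm (hpart A) \<tau> (hpart B)) x)"
proof -
  have pA: "\<forall>w. w \<noteq> 0 \<longrightarrow> Re (qform A w) > 0" using accretive_pos[OF accA] by blast
  have pB: "\<forall>w. w \<noteq> 0 \<longrightarrow> Re (qform B w) > 0" using accretive_pos[OF accB] by blast
  have pHA: "\<forall>w. w \<noteq> 0 \<longrightarrow> Re (qform (hpart A) w) > 0" using pA by (simp add: qform_hpart)
  have pHB: "\<forall>w. w \<noteq> 0 \<longrightarrow> Re (qform (hpart B) w) > 0" using pB by (simp add: qform_hpart)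
  have iA: "invertible A" by (rule posform_invertible[OF pA])
  have iB: "invertible B" by (rule posform_invertible[OF pB])
  have iHA: "invertible (hpart A)" by (rule posform_invertible[OF pHA])
  have iHB: "invertible (hpart B)" by (rule posform_invertible[OF pHB])
  define C where "C = (1 - \<tau>) *\<^sub>R matrix_inv A + \<tau> *\<^sub>R matrix_inv B"
  define D where "D = (1 - \<tau>) *\<^sub>R matrix_inv (hpart A) + \<tau> *\<^sub>R matrix_inv (hpart B)"
  have pC: "\<forall>w. w \<noteq> 0 \<longrightarrow> Re (qform C w) > 0"
    unfolding C_def by (rule comb_pos[OF inv_pos[OF iA pA] inv_pos[OF iB pB] tau])
  have pD: "\<forall>w. w \<noteq> 0 \<longrightarrow> Re (qform D w) > 0"
    unfolding D_def by (rule comb_pos[OF inv_pos[OF iHA pHA] inv_pos[OF iHB pHB] tau])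
  have iC: "invertible C" by (rule posform_invertible[OF pC])
  have iD: "invertible D" by (rule posform_invertible[OF pD])
  have hD: "hermitian D"
    using hermitian_inv[OF iHA hpart_hermitian] hermitian_inv[OF iHB hpart_hermitian]
    by (simp add: D_def hermitian_def cadj_add cadj_scaleR)
  have W: "wharm A \<tau> B = matrix_inv C" by (simp add: wharm_def C_def)
  have W': "wharm (hpart A) \<tau> (hpart B) = matrix_inv D" by (simp add: wharm_def D_def)
  show "hermitian (wharm (hpart A) \<tau> (hpart B))" unfolding W' by (rule hermitian_inv[OF iD hD])
  define s where "s = 1 + t^2"
  have sp: "s > 0" by (simp add: s_def add_pos_nonneg)
  define z where "z = matrix_inv C *v x"
  have Cz: "C *v z = x" by (simp add: z_def inv_apply[OF iC])
  define r where "r = Re (qform C z)"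
  have lhs: "Re (qform (hpart (wharm A \<tau> B)) x) = r"
  proof -
    have "qform (matrix_inv C) x = ip x z" by (simp add: qform_ip z_def)
    also have "\<dots> = ip (C *v z) z" by (simp add: Cz)
    finally show ?thesis by (simp add: W qform_hpart ip_self_M r_def)
  qed
  have rdef: "r = (1 - \<tau>) * Re (qform (matrix_inv A) z) + \<tau> * Re (qform (matrix_inv B) z)"
    by (simp add: r_def C_def qform_add qform_scaleR)
  have dle: "Re (qform D z) \<le> s * r"
  proof -
    have "Re (qform D z) = (1 - \<tau>) * Re (qform (matrix_inv (hpart A)) z) + \<tau> * Re (qform (matrix_inv (hpart B)) z)"
      by (simp add: D_def qform_add qform_scaleR)
    also have "\<dots> \<le> (1 - \<tau>) * (s * Re (qform (matrix_inv A) z)) + \<tau> * (s * Re (qform (matrix_inv B) z))"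
      using ineq_b[OF accA secA t, of z] ineq_b[OF accB secB t, of z] tau
      by (intro add_mono mult_left_mono) (simp_all add: s_def)
    also have "\<dots> = s * r" by (simp add: rdef algebra_simps)
    finally show ?thesis .
  qed
  define v where "v = of_real (1/s) *s z"
  have L2: "2 * Re (ip x v) - Re (qform D v) \<le> Re (qform (matrix_inv D) x)"
    by (rule ineq_L2[OF hD iD]) (use pD pos_nonneg in blast)
  have e1: "Re (ip x v) = r / s"
  proof -
    have "ip x z = ip (C *v z) z" by (simp add: Cz)
    then have "Re (ip x z) = r" by (simp add: ip_self_M r_def)
    then show ?thesis by (simp add: v_def ip_smult_right)
  qed
  have e2: "Re (qform D v) = Re (qform D z) / s^2"
    by (simp add: v_def qform_smult_vec power2_eq_square)
  have "Re (qform D z) / s^2 \<le> r / s"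
    using dle sp by (simp add: divide_le_eq power2_eq_square field_simps)
  then have "r / s \<le> Re (qform (matrix_inv D) x)" using L2 e1 e2 by linarith
  then have "r \<le> s * Re (qform (matrix_inv D) x)" using sp by (simp add: divide_le_eq mult.commute)
  then show "Re (qform (hpart (wharm A \<tau> B)) x) \<le> (1 + t^2) * Re (qform (wharm (hpart A) \<tau> (hpart B)) x)"
    by (simp add: lhs W' s_def)
qed



lemma continuous_on_det:
  fixes F :: "real \<Rightarrow> complex^'n::finite^'n"
  assumes "continuous_on S F"
  shows "continuous_on S (\<lambda>t. det (F t))"
  unfolding det_def
  by (intro continuous_intros continuous_on_component assms)

lemma inv_entry:
  fixes M :: "complex^'n::finite^'n"
  assumes "invertible M"
  shows "matrix_inv M $ i $ j = det (\<chi> a b. if b = i then axis j 1 $ a else M $ a $ b) / det M"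
proof -
  have d: "det M \<noteq> 0" using assms by (simp add: invertible_det_nz)
  have "M *v (matrix_inv M *v axis j 1) = axis j 1" by (simp add: inv_apply[OF assms])
  then have "matrix_inv M *v axis j 1 = (\<chi> k. det (\<chi> a b. if b = k then axis j 1 $ a else M $ a $ b) / det M)"
    using cramer[OF d] by blast
  moreover have "(matrix_inv M *v axis j 1) $ i = matrix_inv M $ i $ j"
    by (simp add: matrix_vector_mult_def axis_def if_distrib cong: if_cong)
  ultimately show ?thesis by simp
qed

lemma cont_entry:
  fixes F :: "real \<Rightarrow> complex^'n::finite^'n"
  assumes c: "continuous_on S F"
  shows "continuous_on S (\<lambda>x. if b = i then (k::complex) else F x $ a $ b)"
  by (cases "b = i") (simp_all add: continuous_on_const continuous_on_component[OF continuous_on_component[OF c]])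

lemma continuous_inv:
  fixes F :: "real \<Rightarrow> complex^'n::finite^'n"
  assumes c: "continuous_on S F" and inv: "\<forall>t\<in>S. invertible (F t)"
  shows "continuous_on S (\<lambda>t. matrix_inv (F t))"
proof -
  have eq: "\<forall>t\<in>S. matrix_inv (F t) = (\<chi> i j. det (\<chi> a b. if b = i then axis j 1 $ a else F t $ a $ b) / det (F t))"
    using inv by (simp add: vec_eq_iff inv_entry)
  have nz: "\<forall>t\<in>S. det (F t) \<noteq> 0" using inv by (simp add: invertible_det_nz)
  have "continuous_on S (\<lambda>t. (\<chi> i j. det (\<chi> a b. if b = i then axis j 1 $ a else F t $ a $ b) / det (F t)))"
    using nz by (intro continuous_on_vec_lambda continuous_on_divide continuous_on_det cont_entry c) auto
  then show ?thesis using continuous_on_cong eq by (metis (no_types, lifting))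
qed



lemma wharm_cont:
  fixes A B :: "complex^'n::finite^'n"
  assumes pA: "\<forall>w. w \<noteq> 0 \<longrightarrow> Re (qform A w) > 0" and pB: "\<forall>w. w \<noteq> 0 \<longrightarrow> Re (qform B w) > 0"
  shows "continuous_on {0..1} (\<lambda>\<tau>. wharm A \<tau> B)"
proof -
  have iA: "invertible A" by (rule posform_invertible[OF pA])
  have iB: "invertible B" by (rule posform_invertible[OF pB])
  have "\<forall>\<tau>\<in>{0..1}. invertible ((1 - \<tau>) *\<^sub>R matrix_inv A + \<tau> *\<^sub>R matrix_inv B)"
  proof
    fix \<tau> :: real assume "\<tau> \<in> {0..1}"
    then show "invertible ((1 - \<tau>) *\<^sub>R matrix_inv A + \<tau> *\<^sub>R matrix_inv B)"
      by (intro posform_invertible comb_pos inv_pos iA iB pA pB) auto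
  qed
  then show ?thesis unfolding wharm_def
    by (intro continuous_inv continuous_intros)
qed

lemma integrable_cont:
  fixes f :: "real \<Rightarrow> 'b::{banach,second_countable_topology}"
  assumes ps: "prob_space \<nu>" and sets: "sets \<nu> = sets (restrict_space borel {0..1})"
    and c: "continuous_on {0..1} f"
  shows "integrable \<nu> f"
proof -
  interpret prob_space \<nu> by (rule ps)
  have sp: "space \<nu> = {0..1}"
    using sets_eq_imp_space_eq[OF sets] by (simp add: space_restrict_space)
  have meas: "f \<in> borel_measurable \<nu>"
    using borel_measurable_continuous_on_restrict[OF c] measurable_cong_sets[OF sets refl] by blast
  have "compact (f ` {0..1})" by (rule compact_continuous_image[OF c compact_Icc])
  then obtain B where B: "\<forall>x\<in>f ` {0..1}. norm x \<le> B"
    using compact_imp_bounded bounded_iff by metis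
  have "AE x in \<nu>. norm (f x) \<le> B" using B sp by (intro AE_I2) auto
  then show ?thesis by (rule integrable_const_bound[OF _ meas])
qed

lemma linear_Re_qform: "bounded_linear (\<lambda>M::complex^'n::finite^'n. Re (qform M x))"
proof -
  have "linear (\<lambda>M::complex^'n::finite^'n. Re (qform M x))"
    by (rule linearI) (simp_all add: qform_add qform_scaleR)
  then show ?thesis by (simp add: linear_conv_bounded_linear)
qed

lemma linear_cadj: "bounded_linear (cadj :: complex^'n::finite^'n \<Rightarrow> _)"
proof -
  have "linear (cadj :: complex^'n::finite^'n \<Rightarrow> _)"
    by (rule linearI) (simp_all add: cadj_add cadj_scaleR)
  then show ?thesis by (simp add: linear_conv_bounded_linear)
qed



lemma cadj_diff: "cadj (A - B) = cadj A - cadj B"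
  by (simp add: cadj_def vec_eq_iff)

theorem mainTheorem8:
  fixes A B :: "complex^'n::finite^'n" and \<alpha> :: real and f :: "real \<Rightarrow> real" and \<nu> :: "real measure"
  assumes "accretive A" and "accretive B"
    and "0 \<le> \<alpha>" and "\<alpha> < pi / 2"
    and "num_range A \<subseteq> sector \<alpha>" and "num_range B \<subseteq> sector \<alpha>"
    and "f \<in> class_m" and "represents \<nu> f"
  shows "loewner_le (hpart (mat_mean \<nu> A B))
           ((1 / (cos \<alpha>)\<^sup>2) *\<^sub>R mat_mean \<nu> (hpart A) (hpart B))"
proof -
  note accA = assms(1) and accB = assms(2)
  have ps: "prob_space \<nu>" and sets: "sets \<nu> = sets (restrict_space borel {0..1})"
    using assms(8) by (auto simp: represents_def)
  have sp: "space \<nu> = {0..1}"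
    using sets_eq_imp_space_eq[OF sets] by (simp add: space_restrict_space)
  define t where "t = tan \<alpha>"
  have t0: "t \<ge> 0"
  proof (cases "\<alpha> = 0")
    case True then show ?thesis by (simp add: t_def)
  next
    case False
    then have "0 < \<alpha>" using assms(3) by simp
    then show ?thesis unfolding t_def using tan_gt_zero[OF _ assms(4)] by (simp add: less_imp_le)
  qed
  have cpos: "cos \<alpha> > 0" using assms(3,4) by (intro cos_gt_zero_pi) auto
  define c where "c = 1 / (cos \<alpha>)\<^sup>2"
  have ct: "c = 1 + t^2"
  proof -
    have "(sin \<alpha>)\<^sup>2 + (cos \<alpha>)\<^sup>2 = 1" by simp
    then show ?thesis using cpos unfolding c_def t_def tan_def
      by (simp add: field_simps power2_eq_square)
  qed
  have secA: "\<forall>w. \<bar>Im (qform A w)\<bar> \<le> t * Re (qform A w)" using sector_all[OF assms(5)] t_def by blast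
  have secB: "\<forall>w. \<bar>Im (qform B w)\<bar> \<le> t * Re (qform B w)" using sector_all[OF assms(6)] t_def by blast
  have pA: "\<forall>w. w \<noteq> 0 \<longrightarrow> Re (qform A w) > 0" using accretive_pos[OF accA] by blast
  have pB: "\<forall>w. w \<noteq> 0 \<longrightarrow> Re (qform B w) > 0" using accretive_pos[OF accB] by blast
  have pHA: "\<forall>w. w \<noteq> 0 \<longrightarrow> Re (qform (hpart A) w) > 0" using pA by (simp add: qform_hpart)
  have pHB: "\<forall>w. w \<noteq> 0 \<longrightarrow> Re (qform (hpart B) w) > 0" using pB by (simp add: qform_hpart)
  define W where "W = (\<lambda>\<tau>. wharm A \<tau> B)"
  define W' where "W' = (\<lambda>\<tau>. wharm (hpart A) \<tau> (hpart B))"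
  have intW: "integrable \<nu> W" unfolding W_def by (rule integrable_cont[OF ps sets wharm_cont[OF pA pB]])
  have intW': "integrable \<nu> W'" unfolding W'_def by (rule integrable_cont[OF ps sets wharm_cont[OF pHA pHB]])
  define I where "I = integral\<^sup>L \<nu> W"
  define I' where "I' = integral\<^sup>L \<nu> W'"
  have mm: "mat_mean \<nu> A B = I" "mat_mean \<nu> (hpart A) (hpart B) = I'"
    by (simp_all add: mat_mean_def I_def I'_def W_def W'_def)
  have herm: "hermitian (c *\<^sub>R I' - hpart I)"
  proof -
    have "cadj I' = integral\<^sup>L \<nu> (\<lambda>\<tau>. cadj (W' \<tau>))"
      unfolding I'_def by (rule integral_bounded_linear[OF linear_cadj intW', symmetric])
    also have "\<dots> = integral\<^sup>L \<nu> (\<lambda>\<tau>. W' \<tau>)"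
    proof (rule Bochner_Integration.integral_cong[OF refl])
      fix \<tau> assume "\<tau> \<in> space \<nu>"
      then have "0 \<le> \<tau>" "\<tau> \<le> 1" using sp by auto
      then show "cadj (W' \<tau>) = W' \<tau>"
        using pointwise(1)[OF accA accB secA secB t0] by (simp add: W'_def hermitian_def)
    qed
    also have "\<dots> = I'" by (simp add: I'_def)
    finally have "cadj I' = I'" .
    moreover have "cadj (hpart I) = hpart I" using hpart_hermitian by (simp add: hermitian_def)
    ultimately show ?thesis by (simp add: hermitian_def cadj_diff cadj_scaleR)
  qed
  have nonneg: "Re (qform (c *\<^sub>R I' - hpart I) x) \<ge> 0" for x
  proof -
    have e: "Re (qform (c *\<^sub>R I' - hpart I) x) = c * Re (qform I' x) - Re (qform I x)"
      by (simp add: qform_diff qform_scaleR qform_hpart)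
    have e1: "Re (qform I' x) = integral\<^sup>L \<nu> (\<lambda>\<tau>. Re (qform (W' \<tau>) x))"
      unfolding I'_def by (rule integral_bounded_linear[OF linear_Re_qform intW', symmetric])
    have e2: "Re (qform I x) = integral\<^sup>L \<nu> (\<lambda>\<tau>. Re (qform (W \<tau>) x))"
      unfolding I_def by (rule integral_bounded_linear[OF linear_Re_qform intW, symmetric])
    have i1: "integrable \<nu> (\<lambda>\<tau>. Re (qform (W \<tau>) x))"
      by (rule integrable_bounded_linear[OF linear_Re_qform intW])
    have i2: "integrable \<nu> (\<lambda>\<tau>. c * Re (qform (W' \<tau>) x))"
      by (intro integrable_mult_right integrable_bounded_linear[OF linear_Re_qform intW'])
    have "integral\<^sup>L \<nu> (\<lambda>\<tau>. Re (qform (W \<tau>) x)) \<le> integral\<^sup>L \<nu> (\<lambda>\<tau>. c * Re (qform (W' \<tau>) x))"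
    proof (rule integral_mono[OF i1 i2])
      fix \<tau> assume "\<tau> \<in> space \<nu>"
      then have "0 \<le> \<tau>" "\<tau> \<le> 1" using sp by auto
      then have "Re (qform (hpart (W \<tau>)) x) \<le> c * Re (qform (W' \<tau>) x)"
        using pointwise(2)[OF accA accB secA secB t0] by (simp add: W_def W'_def ct)
      then show "Re (qform (W \<tau>) x) \<le> c * Re (qform (W' \<tau>) x)" by (simp add: qform_hpart)
    qed
    then show ?thesis using e e1 e2 by simp
  qed
  show ?thesis
    unfolding mm c_def[symmetric] loewner_le_def pos_semidef_def using herm nonneg by blast
qed


end
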